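(* Let $X$ be a topological space. The following are equivalent: (1) $\tau_\omega=\tau_\Gamma$ on $C(X)$; (2) for every $\epsilon\in LSC(X,(0,1))$ there is a continuous $\eta:X\to(0,1)$ with $\eta(x)\le\epsilon(x)$ for every $x\in X$.
   Context: $C(X)$ is the set of continuous real-valued functions on $X$, each identified with its graph in $X\times\mathbb{R}$. The graph topology $\tau_\Gamma$ on $C(X)$ has base $\{F_G: G\text{ open in }X\times\mathbb{R}\}$ where $F_G=\{f\in C(X): f\subset G\}$. $LSC(X,(0,1))$ is the set of lower semicontinuous functions $X\to(0,1)$. The fine (Whitney) topology $\tau_\omega$ on $C(X)$ is the topology with base consisting of all sets $\{g\in C(X): |f(x)-g(x)|<\eta(x)\ \forall x\in X\}$, where $f\in C(X)$ and $\eta:X\to(0,1)$ is continuous. *)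

theory Defs
  imports "HOL-Analysis.Analysis"
begin

text \<open>C(X): continuous real-valued functions on the carrier of X (values outside
  the carrier fixed to undefined, so each function is determined by its graph).\<close>
definition Cfun :: "'a topology \<Rightarrow> ('a \<Rightarrow> real) set" where
  "Cfun X = {f. continuous_map X euclideanreal f \<and> f \<in> extensional (topspace X)}"

definition graph_of :: "'a topology \<Rightarrow> ('a \<Rightarrow> real) \<Rightarrow> ('a \<times> real) set" where
  "graph_of X f = {(x, f x) | x. x \<in> topspace X}"

definition graph_topology :: "'a topology \<Rightarrow> ('a \<Rightarrow> real) topology" where
  "graph_topology X = topology_generated_by
     {{f \<in> Cfun X. graph_of X f \<subseteq> G} | G. openin (prod_topology X euclideanreal) G}"

definition fine_topology :: "'a topology \<Rightarrow> ('a \<Rightarrow> real) topology" where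
  "fine_topology X = topology_generated_by
     {{g \<in> Cfun X. \<forall>x\<in>topspace X. \<bar>f x - g x\<bar> < \<eta> x} | f \<eta>.
        f \<in> Cfun X \<and> continuous_map X euclideanreal \<eta> \<and>
        (\<forall>x\<in>topspace X. 0 < \<eta> x \<and> \<eta> x < 1)}"

definition lsc_on :: "'a topology \<Rightarrow> ('a \<Rightarrow> real) \<Rightarrow> bool" where
  "lsc_on X f \<longleftrightarrow> (\<forall>t. openin X {x \<in> topspace X. t < f x})"

end

theory Submission
  imports Defs
begin

definition WW :: "'a topology \<Rightarrow> ('a \<Rightarrow> real) \<Rightarrow> ('a \<Rightarrow> real) \<Rightarrow> ('a \<Rightarrow> real) set" where
  "WW X f \<eta> = {g \<in> Cfun X. \<forall>x\<in>topspace X. \<bar>f x - g x\<bar> < \<eta> x}"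

definition posf :: "'a topology \<Rightarrow> ('a \<Rightarrow> real) \<Rightarrow> bool" where
  "posf X \<eta> \<longleftrightarrow> continuous_map X euclideanreal \<eta> \<and> (\<forall>x\<in>topspace X. 0 < \<eta> x \<and> \<eta> x < 1)"

lemma gen_sub:
  assumes "\<And>s. s \<in> S \<Longrightarrow> openin (topology_generated_by T) s"
    and "openin (topology_generated_by S) U"
  shows "openin (topology_generated_by T) U"
proof -
  have "generate_topology_on S U" using assms(2) openin_topology_generated_by_iff by blast
  then show ?thesis
    using generate_topology_on_coarsest[of "openin (topology_generated_by T)" S U] assms(1)
    by blast
qed

lemma fine_open_WW:
  assumes "f \<in> Cfun X" "posf X \<eta>"
  shows "openin (fine_topology X) (WW X f \<eta>)"
  unfolding fine_topology_def
  by (rule topology_generated_by_Basis) (use assms in \<open>auto simp: WW_def posf_def\<close>)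

lemma WW_graph_open:
  assumes f: "f \<in> Cfun X" and e: "posf X \<eta>"
  shows "openin (graph_topology X) (WW X f \<eta>)"
proof -
  define G where "G = {p \<in> topspace (prod_topology X euclideanreal).
       (\<lambda>p. \<eta> (fst p) - \<bar>f (fst p) - snd p\<bar>) p \<in> {0<..}}"
  have fc: "continuous_map X euclideanreal f" using f by (simp add: Cfun_def)
  have ec: "continuous_map X euclideanreal \<eta>" using e by (simp add: posf_def)
  have "continuous_map (prod_topology X euclideanreal) euclideanreal
          (\<lambda>p. \<eta> (fst p) - \<bar>f (fst p) - snd p\<bar>)"
    by (intro continuous_intros continuous_map_compose[OF continuous_map_fst fc, unfolded o_def]
         continuous_map_compose[OF continuous_map_fst ec, unfolded o_def])
  then have Go: "openin (prod_topology X euclideanreal) G"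
    unfolding G_def by (rule openin_continuous_map_preimage) auto
  have "WW X f \<eta> = {g \<in> Cfun X. graph_of X g \<subseteq> G}"
    by (auto simp: WW_def G_def graph_of_def)
  then show ?thesis unfolding graph_topology_def
    using Go by (auto intro!: topology_generated_by_Basis)
qed

lemma fine_local:
  assumes "openin (fine_topology X) U" "h \<in> U"
  shows "\<exists>\<eta>. posf X \<eta> \<and> WW X h \<eta> \<subseteq> U"
proof -
  have "generate_topology_on {{g \<in> Cfun X. \<forall>x\<in>topspace X. \<bar>f x - g x\<bar> < \<eta> x} | f \<eta>.
        f \<in> Cfun X \<and> continuous_map X euclideanreal \<eta> \<and>
        (\<forall>x\<in>topspace X. 0 < \<eta> x \<and> \<eta> x < 1)} U"
    using assms(1) unfolding fine_topology_def openin_topology_generated_by_iff .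
  then show ?thesis using assms(2)
  proof (induction arbitrary: h)
    case Empty
    then show ?case by simp
  next
    case (Int a b)
    then obtain \<eta>1 \<eta>2 where 1: "posf X \<eta>1" "WW X h \<eta>1 \<subseteq> a" and 2: "posf X \<eta>2" "WW X h \<eta>2 \<subseteq> b"
      by blast
    have "posf X (\<lambda>x. min (\<eta>1 x) (\<eta>2 x))"
      using 1(1) 2(1) by (auto simp: posf_def intro: continuous_intros)
    moreover have "WW X h (\<lambda>x. min (\<eta>1 x) (\<eta>2 x)) \<subseteq> a \<inter> b"
      using 1(2) 2(2) by (auto simp: WW_def)
    ultimately show ?case by blast
  next
    case (UN K)
    then obtain k where "k \<in> K" "h \<in> k" by blast
    with UN obtain \<eta> where "posf X \<eta>" "WW X h \<eta> \<subseteq> k" by blast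
    then show ?case using \<open>k \<in> K\<close> by blast
  next
    case (Basis s)
    then obtain f \<eta> where s: "s = {g \<in> Cfun X. \<forall>x\<in>topspace X. \<bar>f x - g x\<bar> < \<eta> x}"
      and f: "f \<in> Cfun X" and ec: "continuous_map X euclideanreal \<eta>"
      and ep: "\<forall>x\<in>topspace X. 0 < \<eta> x \<and> \<eta> x < 1" by blast
    have hs: "h \<in> Cfun X" "\<forall>x\<in>topspace X. \<bar>f x - h x\<bar> < \<eta> x" using Basis s by auto
    have fc: "continuous_map X euclideanreal f" and hc: "continuous_map X euclideanreal h"
      using f hs by (auto simp: Cfun_def)
    define \<eta>' where "\<eta>' = (\<lambda>x. \<eta> x - \<bar>f x - h x\<bar>)"
    have "posf X \<eta>'"
      using ec fc hc ep hs(2) unfolding posf_def \<eta>'_def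
      by (auto intro!: continuous_intros)
    moreover have "WW X h \<eta>' \<subseteq> s"
      unfolding WW_def s \<eta>'_def by auto
    ultimately show ?case by blast
  qed
qed

lemma graph_gen_open:
  assumes H: "\<forall>\<epsilon>. lsc_on X \<epsilon> \<and> (\<forall>x\<in>topspace X. 0 < \<epsilon> x \<and> \<epsilon> x < 1) \<longrightarrow>
       (\<exists>\<eta>. continuous_map X euclideanreal \<eta> \<and>
            (\<forall>x\<in>topspace X. 0 < \<eta> x \<and> \<eta> x < 1 \<and> \<eta> x \<le> \<epsilon> x))"
    and G: "openin (prod_topology X euclideanreal) G"
  shows "openin (fine_topology X) {f \<in> Cfun X. graph_of X f \<subseteq> G}"
proof (subst openin_subopen, intro ballI)
  fix h assume "h \<in> {f \<in> Cfun X. graph_of X f \<subseteq> G}"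
  then have hC: "h \<in> Cfun X" and hG: "graph_of X h \<subseteq> G" by auto
  have hc: "continuous_map X euclideanreal h" using hC by (simp add: Cfun_def)
  define P where "P z r \<longleftrightarrow> (\<forall>y. \<bar>y - h z\<bar> < r \<longrightarrow> (z,y) \<in> G)" for z r
  define S where "S x = {r. 0 < r \<and> r \<le> 1/2 \<and> (\<exists>U. openin X U \<and> x \<in> U \<and> (\<forall>z\<in>U. P z r))}" for x
  define \<epsilon> where "\<epsilon> x = Sup (S x)" for x
  have bdd: "bdd_above (S x)" for x unfolding S_def by (auto intro: bdd_aboveI[of _ "1/2"])
  have ne: "S x \<noteq> {}" if x: "x \<in> topspace X" for x
  proof -
    have "(x, h x) \<in> G" using hG x by (auto simp: graph_of_def)
    then obtain U V where U: "openin X U" and V: "openin euclideanreal V" and "x \<in> U" "h x \<in> V"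
      and UV: "U \<times> V \<subseteq> G"
      using G[unfolded openin_prod_topology_alt, rule_format, OF \<open>(x, h x) \<in> G\<close>] by blast
    have "open V" using V open_openin by metis
    then obtain e where e: "e > 0" "ball (h x) e \<subseteq> V" using \<open>h x \<in> V\<close> openE by blast
    define U' where "U' = U \<inter> {z \<in> topspace X. h z \<in> {h x - e/2 <..< h x + e/2}}"
    have "openin X U'" unfolding U'_def
      by (intro openin_Int U openin_continuous_map_preimage[OF hc]) (metis open_greaterThanLessThan open_openin)
    moreover have "x \<in> U'" using \<open>x \<in> U\<close> x e by (auto simp: U'_def)
    moreover have "P z (min (e/2) (1/2))" if "z \<in> U'" for z
      unfolding P_def
    proof (intro allI impI)
      fix y assume "\<bar>y - h z\<bar> < min (e/2) (1/2)"
      moreover have "h z \<in> {h x - e/2 <..< h x + e/2}" using that by (simp add: U'_def)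
      ultimately have "y \<in> ball (h x) e" unfolding mem_ball dist_real_def
        by (simp only: abs_less_iff min_less_iff_conj greaterThanLessThan_iff) linarith
      then show "(z, y) \<in> G" using e UV that by (auto simp: U'_def)
    qed
    ultimately have "min (e/2) (1/2) \<in> S x" using e unfolding S_def
      by (intro CollectI conjI exI[of _ U']) auto
    then show ?thesis by blast
  qed
  have epos: "0 < \<epsilon> x \<and> \<epsilon> x < 1" if xt: "x \<in> topspace X" for x
  proof -
    obtain r where r: "r \<in> S x" using ne[OF xt] by blast
    have "r \<le> \<epsilon> x" unfolding \<epsilon>_def using r bdd by (rule cSup_upper)
    moreover have "\<epsilon> x \<le> 1/2" unfolding \<epsilon>_def using ne[OF xt]
      by (rule cSup_least) (auto simp: S_def)
    moreover have "0 < r" using r by (auto simp: S_def)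
    ultimately show ?thesis by linarith
  qed
  have lsc: "lsc_on X \<epsilon>"
    unfolding lsc_on_def
  proof
    fix t
    show "openin X {x \<in> topspace X. t < \<epsilon> x}"
    proof (subst openin_subopen, intro ballI)
      fix x assume "x \<in> {x \<in> topspace X. t < \<epsilon> x}"
      then have x: "x \<in> topspace X" and tx: "t < \<epsilon> x" by auto
      then obtain r where r: "r \<in> S x" "t < r"
        using less_cSup_iff[OF ne[OF x] bdd] unfolding \<epsilon>_def by blast
      then obtain U where U: "openin X U" "x \<in> U" "\<forall>z\<in>U. P z r" and r0: "0 < r" "r \<le> 1/2"
        unfolding S_def by blast
      have "U \<subseteq> {x \<in> topspace X. t < \<epsilon> x}"
      proof
        fix z assume z: "z \<in> U"
        then have "r \<in> S z" using U r0 unfolding S_def by blast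
        then have "r \<le> \<epsilon> z" unfolding \<epsilon>_def using bdd by (rule cSup_upper)
        then show "z \<in> {x \<in> topspace X. t < \<epsilon> x}"
          using r(2) z openin_subset[OF U(1)] by auto
      qed
      then show "\<exists>T. openin X T \<and> x \<in> T \<and> T \<subseteq> {x \<in> topspace X. t < \<epsilon> x}"
        using U by blast
    qed
  qed
  obtain \<eta> where ec: "continuous_map X euclideanreal \<eta>"
    and ep: "\<forall>x\<in>topspace X. 0 < \<eta> x \<and> \<eta> x < 1 \<and> \<eta> x \<le> \<epsilon> x"
  proof -
    have "\<forall>x\<in>topspace X. 0 < \<epsilon> x \<and> \<epsilon> x < 1" using epos by blast
    from H[rule_format, OF conjI[OF lsc this]] show ?thesis using that by blast
  qed
  have pf: "posf X \<eta>" using ec ep by (simp add: posf_def)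
  have "WW X h \<eta> \<subseteq> {f \<in> Cfun X. graph_of X f \<subseteq> G}"
  proof
    fix g assume g: "g \<in> WW X h \<eta>"
    have "(z, g z) \<in> G" if z: "z \<in> topspace X" for z
    proof -
      have "\<bar>h z - g z\<bar> < \<epsilon> z" using g z ep by (force simp: WW_def)
      then obtain r where r: "r \<in> S z" "\<bar>h z - g z\<bar> < r"
        using less_cSup_iff[OF ne[OF z] bdd] unfolding \<epsilon>_def by blast
      then obtain U where "openin X U" "z \<in> U" "\<forall>z\<in>U. P z r" unfolding S_def by blast
      then have "P z r" by blast
      moreover have "\<bar>g z - h z\<bar> < r" using r(2) by linarith
      ultimately show ?thesis unfolding P_def by blast
    qed
    then show "g \<in> {f \<in> Cfun X. graph_of X f \<subseteq> G}"
      using g by (auto simp: WW_def graph_of_def)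
  qed
  moreover have "h \<in> WW X h \<eta>" using hC ep by (auto simp: WW_def)
  ultimately show "\<exists>T. openin (fine_topology X) T \<and> h \<in> T \<and> T \<subseteq> {f \<in> Cfun X. graph_of X f \<subseteq> G}"
    using fine_open_WW[OF hC pf] by blast
qed


lemma restrict_Cfun:
  assumes "continuous_map X euclideanreal f"
  shows "restrict f (topspace X) \<in> Cfun X"
  unfolding Cfun_def
  using continuous_map_eq[OF assms, of "restrict f (topspace X)"] by auto

theorem proposition1p2:
  fixes X :: "'a topology"
  shows "fine_topology X = graph_topology X \<longleftrightarrow>
    (\<forall>\<epsilon>. lsc_on X \<epsilon> \<and> (\<forall>x\<in>topspace X. 0 < \<epsilon> x \<and> \<epsilon> x < 1) \<longrightarrow>
       (\<exists>\<eta>. continuous_map X euclideanreal \<eta> \<and>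
            (\<forall>x\<in>topspace X. 0 < \<eta> x \<and> \<eta> x < 1 \<and> \<eta> x \<le> \<epsilon> x)))"
proof
  assume eq: "fine_topology X = graph_topology X"
  show "\<forall>\<epsilon>. lsc_on X \<epsilon> \<and> (\<forall>x\<in>topspace X. 0 < \<epsilon> x \<and> \<epsilon> x < 1) \<longrightarrow>
       (\<exists>\<eta>. continuous_map X euclideanreal \<eta> \<and>
            (\<forall>x\<in>topspace X. 0 < \<eta> x \<and> \<eta> x < 1 \<and> \<eta> x \<le> \<epsilon> x))"
  proof (intro allI impI)
    fix \<epsilon> assume a: "lsc_on X \<epsilon> \<and> (\<forall>x\<in>topspace X. 0 < \<epsilon> x \<and> \<epsilon> x < 1)"
    then have lsc: "lsc_on X \<epsilon>" and eb: "\<forall>x\<in>topspace X. 0 < \<epsilon> x \<and> \<epsilon> x < 1" by auto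
    define G where "G = {p \<in> topspace X \<times> UNIV. \<bar>snd p\<bar> < \<epsilon> (fst p)}"
    have Go: "openin (prod_topology X euclideanreal) G"
      unfolding openin_prod_topology_alt
    proof (intro allI impI)
      fix x y assume "(x, y) \<in> G"
      then have x: "x \<in> topspace X" and y: "\<bar>y\<bar> < \<epsilon> x" by (auto simp: G_def)
      define t where "t = (\<bar>y\<bar> + \<epsilon> x) / 2"
      have U: "openin X {z \<in> topspace X. t < \<epsilon> z}" using lsc by (simp add: lsc_on_def)
      have V: "openin euclideanreal {-t<..<t}" by (metis open_greaterThanLessThan open_openin)
      have "x \<in> {z \<in> topspace X. t < \<epsilon> z}" using x y by (simp add: t_def)
      moreover have yt: "\<bar>y\<bar> < t" using y by (simp add: t_def)
      moreover have "y \<in> {-t<..<t}" using yt unfolding greaterThanLessThan_iff abs_less_iff by linarith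
      moreover have "{z \<in> topspace X. t < \<epsilon> z} \<times> {-t<..<t} \<subseteq> G"
        by (auto simp: G_def)
      ultimately show "\<exists>U V. openin X U \<and> openin euclideanreal V \<and> x \<in> U \<and> y \<in> V \<and> U \<times> V \<subseteq> G"
        using U V by blast
    qed
    define h0 where "h0 = restrict (\<lambda>x. 0::real) (topspace X)"
    have h0C: "h0 \<in> Cfun X" unfolding h0_def by (rule restrict_Cfun) simp
    have "h0 \<in> {f \<in> Cfun X. graph_of X f \<subseteq> G}"
      using h0C eb by (auto simp: graph_of_def G_def h0_def)
    moreover have "openin (graph_topology X) {f \<in> Cfun X. graph_of X f \<subseteq> G}"
      unfolding graph_topology_def using Go by (auto intro!: topology_generated_by_Basis)
    ultimately obtain \<eta> where pf: "posf X \<eta>" and sub: "WW X h0 \<eta> \<subseteq> {f \<in> Cfun X. graph_of X f \<subseteq> G}"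
      using fine_local eq by metis
    have ec: "continuous_map X euclideanreal \<eta>" and ep: "\<forall>x\<in>topspace X. 0 < \<eta> x \<and> \<eta> x < 1"
      using pf by (auto simp: posf_def)
    have le: "\<eta> x \<le> \<epsilon> x" if x: "x \<in> topspace X" for x
    proof (rule ccontr)
      assume "\<not> \<eta> x \<le> \<epsilon> x"
      then have lt: "\<epsilon> x < \<eta> x" by simp
      define c where "c = \<epsilon> x / \<eta> x"
      have c: "0 < c" "c < 1" using lt eb ep x by (auto simp: c_def)
      define g where "g = restrict (\<lambda>z. c * \<eta> z) (topspace X)"
      have gC: "g \<in> Cfun X" unfolding g_def
        by (rule restrict_Cfun) (intro continuous_intros ec)
      have "g \<in> WW X h0 \<eta>"
        unfolding WW_def
      proof (intro CollectI conjI ballI gC)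
        fix z assume z: "z \<in> topspace X"
        have "c * \<eta> z < \<eta> z" using c ep z by simp
        moreover have "0 < c * \<eta> z" using c ep z by simp
        ultimately show "\<bar>h0 z - g z\<bar> < \<eta> z" using z by (simp add: h0_def g_def)
      qed
      with sub have "graph_of X g \<subseteq> G" by blast
      then have "(x, g x) \<in> G" using x by (auto simp: graph_of_def)
      moreover have "\<eta> x \<noteq> 0" using x ep by force
      then have "g x = \<epsilon> x" using x by (simp add: g_def c_def)
      ultimately show False using eb x by (simp add: G_def)
    qed
    show "\<exists>\<eta>. continuous_map X euclideanreal \<eta> \<and>
            (\<forall>x\<in>topspace X. 0 < \<eta> x \<and> \<eta> x < 1 \<and> \<eta> x \<le> \<epsilon> x)"
      using ec ep le by blast
  qed
next
  assume H: "\<forall>\<epsilon>. lsc_on X \<epsilon> \<and> (\<forall>x\<in>topspace X. 0 < \<epsilon> x \<and> \<epsilon> x < 1) \<longrightarrow>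
       (\<exists>\<eta>. continuous_map X euclideanreal \<eta> \<and>
            (\<forall>x\<in>topspace X. 0 < \<eta> x \<and> \<eta> x < 1 \<and> \<eta> x \<le> \<epsilon> x))"
  show "fine_topology X = graph_topology X"
    unfolding topology_eq
  proof (intro allI iffI)
    fix U assume "openin (fine_topology X) U"
    then show "openin (graph_topology X) U"
      unfolding fine_topology_def graph_topology_def
    proof (rule gen_sub[rotated])
      fix s assume "s \<in> {{g \<in> Cfun X. \<forall>x\<in>topspace X. \<bar>f x - g x\<bar> < \<eta> x} | f \<eta>.
        f \<in> Cfun X \<and> continuous_map X euclideanreal \<eta> \<and>
        (\<forall>x\<in>topspace X. 0 < \<eta> x \<and> \<eta> x < 1)}"
      then obtain f \<eta> where "s = WW X f \<eta>" "f \<in> Cfun X" "posf X \<eta>"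
        by (auto simp: WW_def posf_def)
      then have "openin (graph_topology X) s" using WW_graph_open by blast
      then show "openin (topology_generated_by {{f \<in> Cfun X. graph_of X f \<subseteq> G} | G. openin (prod_topology X euclideanreal) G}) s"
        unfolding graph_topology_def .
    qed
  next
    fix U assume "openin (graph_topology X) U"
    then show "openin (fine_topology X) U"
      unfolding graph_topology_def fine_topology_def
    proof (rule gen_sub[rotated])
      fix s assume "s \<in> {{f \<in> Cfun X. graph_of X f \<subseteq> G} | G. openin (prod_topology X euclideanreal) G}"
      then obtain G where "s = {f \<in> Cfun X. graph_of X f \<subseteq> G}" "openin (prod_topology X euclideanreal) G"
        by blast
      then have "openin (fine_topology X) s" using graph_gen_open[OF H] by blast
      then show "openin (topology_generated_by {{g \<in> Cfun X. \<forall>x\<in>topspace X. \<bar>f x - g x\<bar> < \<eta> x} | f \<eta>.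
        f \<in> Cfun X \<and> continuous_map X euclideanreal \<eta> \<and>
        (\<forall>x\<in>topspace X. 0 < \<eta> x \<and> \<eta> x < 1)}) s"
        unfolding fine_topology_def .
    qed
  qed
qed

end
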